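(* Let $k\ge 1$. Let $f, g_1,\ldots,g_k:(-\infty,0)\to\mathbb{R}$ and $s:[0,\infty)\to\mathbb{R}$ be ordinal decreasing functions that are strictly positive at every point of their domains. Consider the recursive algorithm \[ M(x)=\begin{cases} f(x), & x<0,\\ g_1\bigl(-M(x-g_2(-M(x-\cdots-g_k(-M(x-s(x)))\cdots)))\bigr), & x\ge 0.\end{cases} \] Then for every $x\in\mathbb{R}$ the computation of $M(x)$ halts (i.e. the recursion is well-founded and $M(x)$ is a well-defined real number), and the resulting function $M:\mathbb{R}\to\mathbb{R}$ is ordinal decreasing.
   Context: For $D\subseteq\mathbb{R}$ and $h:D\to\mathbb{R}$, a strictly decreasing sequence $x_1>x_2>x_3>\cdots$ of points of $D$ is called $h$-bad if $h(x_1)>h(x_2)>h(x_3)>\cdots$. The function $h$ is called ordinal decreasing if there is no infinite $h$-bad sequence. *)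

theory Defs
  imports Main "HOL.Real"
begin

definition ord_dec :: "real set \<Rightarrow> (real \<Rightarrow> real) \<Rightarrow> bool" where
  "ord_dec D h \<longleftrightarrow>
     \<not> (\<exists>X :: nat \<Rightarrow> real. (\<forall>n. X n \<in> D) \<and> (\<forall>n. X (Suc n) < X n)
                          \<and> (\<forall>n. h (X (Suc n)) < h (X n)))"

text \<open>Big-step (halting) semantics of the recursive algorithm
  M(x) = f(x) for x<0, and for x\<ge>0
  M(x) = g_1(-M(x - g_2(-M(x - ... - g_k(-M(x - s(x)))...)))).
  evalM f g s k x v: the computation of M(x) halts with result v (finite derivation).
  chainM f g s k x j a: the j-th intermediate value a_j of the computation of M(x), where
  a_(k+1) = s(x) and a_j = g_j(-M(x - a_(j+1))) for 1 \<le> j \<le> k; M(x) = a_1.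
  Applying g_j requires its argument to lie in its domain (-\<infinity>,0).\<close>
inductive evalM and chainM
  for f :: "real \<Rightarrow> real" and g :: "nat \<Rightarrow> real \<Rightarrow> real"
    and s :: "real \<Rightarrow> real" and k :: nat
where
  neg: "x < 0 \<Longrightarrow> evalM f g s k x (f x)"
| nonneg: "0 \<le> x \<Longrightarrow> chainM f g s k x 1 v \<Longrightarrow> evalM f g s k x v"
| start: "0 \<le> x \<Longrightarrow> chainM f g s k x (Suc k) (s x)"
| step: "1 \<le> j \<Longrightarrow> j \<le> k \<Longrightarrow> chainM f g s k x (Suc j) b \<Longrightarrow>
         evalM f g s k (x - b) m \<Longrightarrow> - m < 0 \<Longrightarrow> chainM f g s k x j (g j (- m))"

end

theory Submission
  imports Defs Complex_Main
begin


lemma subseq_choice: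
  assumes "\<forall>n::nat. \<exists>m>n. P n m"
  shows "\<exists>r. strict_mono r \<and> (\<forall>n. P (r n) (r (Suc n)))"
proof -
  obtain c where c: "\<And>n. c n > n \<and> P n (c n)" using assms by metis
  define r where "r n = (c ^^ n) 0" for n
  have rs: "r (Suc n) = c (r n)" for n by (simp add: r_def)
  have "strict_mono r" unfolding strict_mono_Suc_iff by (simp add: rs c)
  moreover have "\<forall>n. P (r n) (r (Suc n))" using c rs by simp
  ultimately show ?thesis by blast
qed

lemma dec_trans:
  fixes X :: "nat \<Rightarrow> real"
  assumes "\<forall>n. X (Suc n) < X n" "m < n"
  shows "X n < X m"
  using assms(2)
proof (induction n)
  case 0 then show ?case by simp
next
  case (Suc n)
  then show ?case using assms(1) by (metis less_Suc_eq order_less_trans)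
qed

lemma dec_comp:
  fixes X :: "nat \<Rightarrow> real"
  assumes "\<forall>n. X (Suc n) < X n" "strict_mono r"
  shows "\<forall>n. X (r (Suc n)) < X (r n)"
  using assms dec_trans by (simp add: strict_mono_def)

lemma ord_decI_sub:
  assumes "ord_dec D h" "\<forall>n. X n \<in> D" "\<forall>n. X (Suc n) < X n"
  shows "\<exists>r. strict_mono r \<and> (\<forall>n. h (X (r n)) \<le> h (X (r (Suc n))))"
proof -
  obtain r0 where r0: "strict_mono r0" "monoseq (\<lambda>n. h (X (r0 n)))" using seq_monosub[of "\<lambda>n. h (X n)"] by blast
  define u where "u n = h (X (r0 n))" for n
  show ?thesis
  proof (cases "\<forall>m. \<forall>n\<ge>m. u m \<le> u n")
    case True
    then show ?thesis using r0 unfolding u_def by (metis le_SucI order_refl)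
  next
    case False
    then have dec: "\<forall>m. \<forall>n\<ge>m. u n \<le> u m" using r0(2) unfolding monoseq_def u_def by blast
    show ?thesis
    proof (cases "\<exists>N. \<forall>n\<ge>N. u n = u N")
      case True
      then obtain N where N: "\<forall>n\<ge>N. u n = u N" by blast
      have "strict_mono (\<lambda>n. r0 (n + N))" using r0(1) by (simp add: strict_mono_def)
      moreover have "\<forall>n. u (n + N) \<le> u (Suc n + N)" using N
        by (metis le_add2 order_refl)
      ultimately show ?thesis unfolding u_def by blast
    next
      case False
      then have "\<forall>N. \<exists>n>N. u n < u N" using dec
        by (metis le_eq_less_or_eq order_less_le)
      then obtain r1 where r1: "strict_mono r1" "\<forall>n. u (r1 (Suc n)) < u (r1 n)"
        using subseq_choice[of "\<lambda>m n. u n < u m"] by blast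
      have "strict_mono (r0 \<circ> r1)" using r0(1) r1(1) by (simp add: strict_mono_def)
      then have "\<forall>n. X ((r0 \<circ> r1) (Suc n)) < X ((r0 \<circ> r1) n)" using dec_comp assms(3) by blast
      moreover have "\<forall>n. h (X ((r0 \<circ> r1) (Suc n))) < h (X ((r0 \<circ> r1) n))" using r1(2) unfolding u_def by simp
      ultimately have "\<exists>Y. (\<forall>n. Y n \<in> D) \<and> (\<forall>n. Y (Suc n) < Y n) \<and> (\<forall>n. h (Y (Suc n)) < h (Y n))"
        using assms(2) by (intro exI[of _ "\<lambda>n. X ((r0 \<circ> r1) n)"]) simp
      then have False using assms(1) unfolding ord_dec_def by blast
      then show ?thesis ..
    qed
  qed
qed

lemma ord_decI_sub2:
  assumes "ord_dec D h" "\<forall>n. X n \<in> D" "\<forall>n. X (Suc n) \<le> X n"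
  shows "\<exists>r. strict_mono r \<and> (\<forall>n. h (X (r n)) \<le> h (X (r (Suc n))))"
proof (cases "\<exists>N. \<forall>n\<ge>N. X n = X N")
  case True
  then obtain N where N: "\<forall>n\<ge>N. X n = X N" by blast
  have "strict_mono (\<lambda>n. n + N)" by (simp add: strict_mono_def)
  moreover have "\<forall>n. h (X (n + N)) \<le> h (X (Suc n + N))" using N by (metis le_add2 order_refl)
  ultimately show ?thesis by blast
next
  case False
  have dec: "decseq X" using assms(3) by (simp add: decseq_SucI)
  have "\<forall>N. \<exists>n>N. X n < X N"
  proof
    fix N
    obtain n where "n \<ge> N" "X n \<noteq> X N" using False by blast
    moreover have "X n \<le> X N" using dec \<open>n \<ge> N\<close> by (simp add: decseqD)
    ultimately show "\<exists>n>N. X n < X N" by (metis le_neq_implies_less order_less_le)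
  qed
  then obtain r1 where r1: "strict_mono r1" "\<forall>n. X (r1 (Suc n)) < X (r1 n)"
    using subseq_choice[of "\<lambda>m n. X n < X m"] by blast
  obtain r2 where r2: "strict_mono r2" "\<forall>n. h (X (r1 (r2 n))) \<le> h (X (r1 (r2 (Suc n))))"
    using ord_decI_sub[OF assms(1), of "X \<circ> r1"] assms(2) r1(2) by auto
  have "strict_mono (r1 \<circ> r2)" using r1(1) r2(1) by (simp add: strict_mono_def)
  then show ?thesis using r2(2) by (metis comp_apply)
qed

lemma ord_dec_mono: "ord_dec D h \<Longrightarrow> D' \<subseteq> D \<Longrightarrow> ord_dec D' h"
  unfolding ord_dec_def by blast

lemma ord_dec_cong: "ord_dec D h \<Longrightarrow> \<forall>x\<in>D. h x = h' x \<Longrightarrow> ord_dec D h'"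
  unfolding ord_dec_def by (metis (no_types, lifting))

lemma lower_bound:
  fixes a :: "real \<Rightarrow> real"
  assumes d: "\<delta> > 0" and pos: "\<forall>y\<in>{t<..<t+\<delta>}. a y > 0"
    and P: "\<forall>Y. (\<forall>n. Y n \<in> {t<..<t+\<delta>}) \<and> (\<forall>n. Y (Suc n) < Y n) \<longrightarrow>
          (\<exists>r. strict_mono r \<and> (\<forall>n. a (Y (r n)) \<le> a (Y (r (Suc n)))))"
  shows "\<exists>\<delta>'>0. \<delta>' \<le> \<delta> \<and> (\<exists>c>0. \<forall>y\<in>{t<..<t+\<delta>'}. c \<le> a y)"
proof (rule ccontr)
  assume "\<not> ?thesis"
  then have H: "\<forall>\<delta>'>0. \<delta>' \<le> \<delta> \<longrightarrow> (\<forall>c>0. \<exists>y\<in>{t<..<t+\<delta>'}. a y < c)"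
    by (meson not_le)
  have st: "\<exists>y. y\<in>{t<..<t+\<delta>}" using d by (intro exI[of _ "t + \<delta>/2"]) auto
  have "\<exists>Y. \<forall>n. Y n \<in> {t<..<t+\<delta>} \<and> (Y (Suc n) < Y n \<and> a (Y (Suc n)) < a (Y n))"
  proof (rule dependent_nat_choice)
    show "\<exists>x. x \<in> {t<..<t+\<delta>}" using st .
  next
    fix x and n :: nat assume x: "x \<in> {t<..<t+\<delta>}"
    then have "x - t > 0" "x - t \<le> \<delta>" "a x > 0" using pos by auto
    then obtain y where "y\<in>{t<..<t+(x-t)}" "a y < a x" using H by blast
    then show "\<exists>y. y \<in> {t<..<t+\<delta>} \<and> y < x \<and> a y < a x" using x by auto
  qed
  then obtain Y where Y: "\<forall>n. Y n \<in> {t<..<t+\<delta>}" "\<forall>n. Y (Suc n) < Y n" "\<forall>n. a (Y (Suc n)) < a (Y n)"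
    by blast
  then obtain r where r: "strict_mono r" "\<forall>n. a (Y (r n)) \<le> a (Y (r (Suc n)))" using P by blast
  have "\<forall>n. (\<lambda>n. a (Y n)) (r (Suc n)) < (\<lambda>n. a (Y n)) (r n)"
    by (rule dec_comp) (use Y r in auto)
  then show False using r(2) by (metis not_le)
qed



locale Msys =
  fixes f :: "real \<Rightarrow> real" and g :: "nat \<Rightarrow> real \<Rightarrow> real"
    and s :: "real \<Rightarrow> real" and k :: nat
  assumes k1: "k \<ge> 1"
    and fo: "ord_dec {..<0} f" and fp: "\<forall>x<0. f x > 0"
    and go: "\<forall>j\<in>{1..k}. ord_dec {..<0} (g j)"
    and gp: "\<forall>j\<in>{1..k}. \<forall>x<0. g j x > 0"
    and so: "ord_dec {0..} s" and sp: "\<forall>x\<ge>0. s x > 0"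
begin

definition Mf where "Mf x = (THE v. evalM f g s k x v)"
definition A where "A x j = (THE a. chainM f g s k x j a)"

lemma pos:
  "evalM f g s k x v \<Longrightarrow> v > 0"
  "chainM f g s k x j a \<Longrightarrow> a > 0 \<and> 0 \<le> x \<and> 1 \<le> j \<and> j \<le> Suc k"
proof (induction rule: evalM_chainM.inducts)
  case (neg x) then show ?case using fp by auto
next
  case (nonneg x v) then show ?case by auto
next
  case (start x) then show ?case using sp k1 by auto
next
  case (step j x b m) then show ?case using gp by auto
qed

lemma uniq:
  "evalM f g s k x v \<Longrightarrow> evalM f g s k x v' \<Longrightarrow> v' = v"
  "chainM f g s k x j a \<Longrightarrow> chainM f g s k x j a' \<Longrightarrow> a' = a"
proof (induction arbitrary: v' and a' rule: evalM_chainM.inducts)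
  case (neg x)
  from neg.prems show ?case
  proof cases
    case neg then show ?thesis by simp
  next
    case nonneg then show ?thesis using \<open>x < 0\<close> by simp
  qed
next
  case (nonneg x v)
  from nonneg.prems show ?case
  proof cases
    case neg then show ?thesis using \<open>0 \<le> x\<close> by simp
  next
    case nonneg then show ?thesis using nonneg.IH by blast
  qed
next
  case (start x)
  from start.prems show ?case
  proof cases
    case start then show ?thesis by simp
  next
    case step then show ?thesis by simp
  qed
next
  case (step j x b m)
  note outer = step
  from step.prems show ?case
  proof cases
    case start then show ?thesis using \<open>j \<le> k\<close> by simp
  next
    case (step b' m')
    have "b' = b" using outer step by blast
    then have "m' = m" using outer step by blast
    then show ?thesis using step by simp
  qed
qed

lemma Mf_eq: "evalM f g s k x v \<Longrightarrow> Mf x = v"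
  unfolding Mf_def using uniq(1) by blast

lemma A_eq: "chainM f g s k x j a \<Longrightarrow> A x j = a"
  unfolding A_def using uniq(2) by blast

lemma Mf_neg: "x < 0 \<Longrightarrow> Mf x = f x"
  using Mf_eq evalM_chainM.neg by blast

lemma halt_local:
  assumes "0 \<le> y" "\<forall>x<y. \<exists>v. evalM f g s k x v"
  shows "\<exists>v. evalM f g s k y v"
proof -
  have "\<exists>a. chainM f g s k y j a" if "1 \<le> j" "j \<le> Suc k" for j
    using that(2)
  proof (induction j rule: inc_induct)
    case base then show ?case using evalM_chainM.start assms(1) by blast
  next
    case (step n)
    then obtain b where b: "chainM f g s k y (Suc n) b" by blast
    then have "b > 0" using pos(2) by blast
    then obtain m where m: "evalM f g s k (y - b) m" using assms(2) by force
    then have "m > 0" using pos(1) by blast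
    have "1 \<le> n" "n \<le> k" using step(1,2) that(1) by auto
    then show ?case using evalM_chainM.step[OF _ _ b m] \<open>m > 0\<close> by auto
  qed
  then obtain a where "chainM f g s k y 1 a" using k1 by fastforce
  then show ?thesis using evalM_chainM.nonneg assms(1) by blast
qed


lemma chainC:
  assumes t0: "0 \<le> t" and H1: "\<forall>x<t. \<exists>v. evalM f g s k x v" and H2: "ord_dec {..<t} Mf"
    and j: "1 \<le> j" "j \<le> Suc k"
  shows "\<exists>\<delta>>0. (\<forall>y\<in>{t<..<t+\<delta>}. chainM f g s k y j (A y j)) \<and>
     (\<forall>Y. (\<forall>n. Y n \<in> {t<..<t+\<delta>}) \<and> (\<forall>n. Y (Suc n) < Y n) \<longrightarrow>
        (\<exists>r. strict_mono r \<and> (\<forall>n. A (Y (r n)) j \<le> A (Y (r (Suc n))) j)))"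
  using j(2)
proof (induction j rule: inc_induct)
  case base
  have ch: "chainM f g s k y (Suc k) (s y)" if "y \<in> {t<..<t+1}" for y
    using evalM_chainM.start that t0 by auto
  then have Aeq: "A y (Suc k) = s y" if "y \<in> {t<..<t+1}" for y using A_eq that by blast
  have "\<forall>Y. (\<forall>n. Y n \<in> {t<..<t+1}) \<and> (\<forall>n. Y (Suc n) < Y n) \<longrightarrow>
        (\<exists>r. strict_mono r \<and> (\<forall>n. A (Y (r n)) (Suc k) \<le> A (Y (r (Suc n))) (Suc k)))"
  proof (intro allI impI)
    fix Y :: "nat \<Rightarrow> real" assume Y: "(\<forall>n. Y n \<in> {t<..<t+1}) \<and> (\<forall>n. Y (Suc n) < Y n)"
    have "\<forall>n. Y n \<in> {0..}"
    proof
      fix n have "t < Y n" using Y by auto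
      then show "Y n \<in> {0..}" using t0 by simp
    qed
    then obtain r where "strict_mono r" "\<forall>n. s (Y (r n)) \<le> s (Y (r (Suc n)))"
      using ord_decI_sub[OF so] Y by blast
    then show "\<exists>r. strict_mono r \<and> (\<forall>n. A (Y (r n)) (Suc k) \<le> A (Y (r (Suc n))) (Suc k))"
      using Aeq Y by auto
  qed
  then show ?case using ch Aeq by (intro exI[of _ 1]) auto
next
  case (step n)
  have n1: "1 \<le> n" "n \<le> k" using step(1,2) j(1) by auto
  obtain \<delta>1 where d1: "\<delta>1 > 0" and C1: "\<forall>y\<in>{t<..<t+\<delta>1}. chainM f g s k y (Suc n) (A y (Suc n))"
    and P1: "\<forall>Y. (\<forall>n. Y n \<in> {t<..<t+\<delta>1}) \<and> (\<forall>n. Y (Suc n) < Y n) \<longrightarrow>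
        (\<exists>r. strict_mono r \<and> (\<forall>m. A (Y (r m)) (Suc n) \<le> A (Y (r (Suc m))) (Suc n)))"
    using step(3) by blast
  have posA: "\<forall>y\<in>{t<..<t+\<delta>1}. A y (Suc n) > 0" using C1 pos(2) by blast
  obtain \<delta>2 c where d2: "\<delta>2 > 0" "\<delta>2 \<le> \<delta>1" and c: "c > 0" "\<forall>y\<in>{t<..<t+\<delta>2}. c \<le> A y (Suc n)"
    using lower_bound[OF d1 posA P1] by blast
  define \<delta> where "\<delta> = min \<delta>2 c"
  have dpos: "\<delta> > 0" using d2 c by (simp add: \<delta>_def)
  have ev: "y - A y (Suc n) < t \<and> chainM f g s k y n (A y n) \<and> A y n = g n (- Mf (y - A y (Suc n)))
     \<and> Mf (y - A y (Suc n)) > 0"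
    if y: "y \<in> {t<..<t+\<delta>}" for y
  proof -
    have y1: "y \<in> {t<..<t+\<delta>1}" "y \<in> {t<..<t+\<delta>2}" using y d2 by (auto simp: \<delta>_def)
    define b where "b = A y (Suc n)"
    have b: "chainM f g s k y (Suc n) b" "c \<le> b" using C1 c y1 by (auto simp: b_def)
    have lt: "y - b < t" using y b(2) by (auto simp: \<delta>_def)
    then obtain v where v: "evalM f g s k (y - b) v" using H1 by blast
    then have Mv: "Mf (y - b) = v" "v > 0" using Mf_eq pos(1) by auto
    have "chainM f g s k y n (g n (- v))" using evalM_chainM.step[OF n1 b(1) v] Mv by auto
    then show ?thesis using A_eq lt Mv by (auto simp: b_def)
  qed
  have "\<forall>Y. (\<forall>m. Y m \<in> {t<..<t+\<delta>}) \<and> (\<forall>m. Y (Suc m) < Y m) \<longrightarrow>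
        (\<exists>r. strict_mono r \<and> (\<forall>m. A (Y (r m)) n \<le> A (Y (r (Suc m))) n))"
  proof (intro allI impI)
    fix Y :: "nat \<Rightarrow> real" assume Y: "(\<forall>m. Y m \<in> {t<..<t+\<delta>}) \<and> (\<forall>m. Y (Suc m) < Y m)"
    have "\<forall>m. Y m \<in> {t<..<t+\<delta>1}"
    proof
      fix m have "t < Y m" "Y m < t + \<delta>" using Y by auto
      then show "Y m \<in> {t<..<t+\<delta>1}" using d2 by (auto simp: \<delta>_def)
    qed
    then obtain r1 where r1: "strict_mono r1" "\<forall>m. A (Y (r1 m)) (Suc n) \<le> A (Y (r1 (Suc m))) (Suc n)"
      using P1 Y by blast
    define Z where "Z m = Y (r1 m) - A (Y (r1 m)) (Suc n)" for m
    have Yd: "\<forall>m. Y (r1 (Suc m)) < Y (r1 m)" using dec_comp Y r1(1) by blast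
    have Zd: "\<forall>m. Z (Suc m) < Z m" using Yd r1(2) unfolding Z_def
      by (smt (verit))
    have Zin: "\<forall>m. Z m \<in> {..<t}" using ev Y unfolding Z_def by auto
    obtain r2 where r2: "strict_mono r2" "\<forall>m. Mf (Z (r2 m)) \<le> Mf (Z (r2 (Suc m)))"
      using ord_decI_sub[OF H2 Zin Zd] by blast
    define W where "W m = - Mf (Z (r2 m))" for m
    have Wd: "\<forall>m. W (Suc m) \<le> W m" using r2(2) unfolding W_def by auto
    have Win: "\<forall>m. W m \<in> {..<0}" using ev Y unfolding W_def Z_def by auto
    have gn: "ord_dec {..<0} (g n)" using go n1 by auto
    obtain r3 where r3: "strict_mono r3" "\<forall>m. g n (W (r3 m)) \<le> g n (W (r3 (Suc m)))"
      using ord_decI_sub2[OF gn Win Wd] by blast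
    have eqA: "A (Y (r1 (r2 m))) n = g n (W m)" for m
      using ev Y unfolding W_def Z_def by auto
    have "strict_mono (r1 \<circ> r2 \<circ> r3)" using r1(1) r2(1) r3(1) by (simp add: strict_mono_def)
    moreover have "\<forall>m. A (Y ((r1 \<circ> r2 \<circ> r3) m)) n \<le> A (Y ((r1 \<circ> r2 \<circ> r3) (Suc m))) n"
      using r3(2) eqA by simp
    ultimately show "\<exists>r. strict_mono r \<and> (\<forall>m. A (Y (r m)) n \<le> A (Y (r (Suc m))) n)" by blast
  qed
  then show ?case using ev dpos by blast
qed

lemma key:
  assumes t0: "0 \<le> t" and H1: "\<forall>x<t. \<exists>v. evalM f g s k x v" and H2: "ord_dec {..<t} Mf"
  shows "\<exists>\<delta>>0. (\<forall>x<t+\<delta>. \<exists>v. evalM f g s k x v) \<and> ord_dec {..<t+\<delta>} Mf"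
proof -
  obtain \<delta> where d: "\<delta> > 0" and C: "\<forall>y\<in>{t<..<t+\<delta>}. chainM f g s k y 1 (A y 1)"
    and P: "\<forall>Y. (\<forall>n. Y n \<in> {t<..<t+\<delta>}) \<and> (\<forall>n. Y (Suc n) < Y n) \<longrightarrow>
        (\<exists>r. strict_mono r \<and> (\<forall>n. A (Y (r n)) 1 \<le> A (Y (r (Suc n))) 1))"
    using chainC[OF t0 H1 H2, of 1] by auto
  have ev: "evalM f g s k y (A y 1)" "Mf y = A y 1" if "y \<in> {t<..<t+\<delta>}" for y
    using C that evalM_chainM.nonneg t0 Mf_eq by fastforce+
  have halt: "\<forall>x<t+\<delta>. \<exists>v. evalM f g s k x v"
  proof (intro allI impI)
    fix x assume x: "x < t + \<delta>"
    consider "x < t" | "x = t" | "x \<in> {t<..<t+\<delta>}" using x by force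
    then show "\<exists>v. evalM f g s k x v"
    proof cases
      case 1 then show ?thesis using H1 by blast
    next
      case 2 then show ?thesis using halt_local t0 H1 by blast
    next
      case 3 then show ?thesis using ev by blast
    qed
  qed
  have "ord_dec {..<t+\<delta>} Mf"
    unfolding ord_dec_def
  proof
    assume "\<exists>X. (\<forall>n. X n \<in> {..<t+\<delta>}) \<and> (\<forall>n. X (Suc n) < X n) \<and> (\<forall>n. Mf (X (Suc n)) < Mf (X n))"
    then obtain X where X: "\<forall>n. X n \<in> {..<t+\<delta>}" "\<forall>n. X (Suc n) < X n" "\<forall>n. Mf (X (Suc n)) < Mf (X n)"
      by blast
    show False
    proof (cases "\<exists>N. X N \<le> t")
      case True
      then obtain N where N: "X N \<le> t" by blast
      have "X (m + Suc N) < X N" for m using dec_trans[OF X(2), of N "m + Suc N"] by simp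
      then have "\<forall>m. X (m + Suc N) \<in> {..<t}" using N by (metis lessThan_iff order_less_le_trans)
      moreover have "\<forall>m. X (Suc m + Suc N) < X (m + Suc N)" using X(2) by simp
      moreover have "\<forall>m. Mf (X (Suc m + Suc N)) < Mf (X (m + Suc N))" using X(3) by simp
      ultimately have "\<exists>Y. (\<forall>n. Y n \<in> {..<t}) \<and> (\<forall>n. Y (Suc n) < Y n) \<and> (\<forall>n. Mf (Y (Suc n)) < Mf (Y n))"
        by (intro exI[of _ "\<lambda>m. X (m + Suc N)"]) simp
      then show False using H2 unfolding ord_dec_def by blast
    next
      case False
      then have Xin: "\<forall>n. X n \<in> {t<..<t+\<delta>}" using X(1) by (auto simp: not_le)
      then obtain r where r: "strict_mono r" "\<forall>n. A (X (r n)) 1 \<le> A (X (r (Suc n))) 1"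
        using P X(2) by blast
      have "\<forall>n. (\<lambda>n. Mf (X n)) (r (Suc n)) < (\<lambda>n. Mf (X n)) (r n)"
        by (rule dec_comp) (use X(3) r(1) in auto)
      then have "Mf (X (r 1)) < Mf (X (r 0))" by simp
      moreover have "A (X (r 0)) 1 \<le> A (X (r 1)) 1" using r(2) by (metis One_nat_def)
      ultimately show False using ev(2) Xin by (metis not_le)
    qed
  qed
  then show ?thesis using d halt by blast
qed

lemma main: "(\<forall>x. \<exists>v. evalM f g s k x v) \<and> ord_dec UNIV Mf"
proof -
  define S where "S = {x. (\<forall>y<x. \<exists>v. evalM f g s k y v) \<and> ord_dec {..<x} Mf}"
  have Sh: "\<exists>v. evalM f g s k y v" if "x \<in> S" "y < x" for x y
    using that unfolding S_def by blast
  have So: "ord_dec {..<x} Mf" if "x \<in> S" for x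
    using that unfolding S_def by blast
  have Sbad: False if "x \<in> S" "\<forall>n. X n \<in> {..<x}" "\<forall>n. X (Suc n) < X n" "\<forall>n. Mf (X (Suc n)) < Mf (X n)" for x X
  proof -
    have "\<exists>X. (\<forall>n. X n \<in> {..<x}) \<and> (\<forall>n. X (Suc n) < X n) \<and> (\<forall>n. Mf (X (Suc n)) < Mf (X n))"
      using that(2-4) by blast
    then show False using So[OF that(1)] unfolding ord_dec_def by blast
  qed
  have down: "x' \<in> S" if "x \<in> S" "x' \<le> x" for x x'
  proof -
    have "\<forall>y<x'. \<exists>v. evalM f g s k y v" using Sh[OF that(1)] that(2) by simp
    moreover have "ord_dec {..<x'} Mf" using ord_dec_mono[OF So[OF that(1)]] that(2) by simp
    ultimately show ?thesis unfolding S_def by simp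
  qed
  have S0: "0 \<in> S"
  proof -
    have "\<forall>y<0. \<exists>v. evalM f g s k y v" using evalM_chainM.neg by blast
    moreover have "ord_dec {..<0} Mf" using ord_dec_cong[OF fo] Mf_neg by simp
    ultimately show ?thesis unfolding S_def by simp
  qed
  have allS: "x \<in> S" for x
  proof (rule ccontr)
    assume x0: "x \<notin> S"
    have bd: "y < x" if "y \<in> S" for y
    proof (rule ccontr)
      assume "\<not> y < x"
      then have "x \<le> y" by simp
      then show False using down[OF that] x0 by blast
    qed
    have bdd: "bdd_above S" by (rule bdd_aboveI[of _ x]) (use bd in \<open>auto intro: less_imp_le\<close>)
    have ne: "S \<noteq> {}" using S0 by blast
    define t where "t = Sup S"
    have t0: "0 \<le> t" using cSup_upper[OF S0 bdd] by (simp add: t_def)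
    have lt: "\<exists>x\<in>S. y < x" if "y < t" for y using less_cSup_iff[OF ne bdd] that by (simp add: t_def)
    have H1: "\<forall>y<t. \<exists>v. evalM f g s k y v"
    proof (intro allI impI)
      fix y assume "y < t"
      then obtain z where "z \<in> S" "y < z" using lt by blast
      then show "\<exists>v. evalM f g s k y v" using Sh by blast
    qed
    have H2: "ord_dec {..<t} Mf"
      unfolding ord_dec_def
    proof
      assume "\<exists>X. (\<forall>n. X n \<in> {..<t}) \<and> (\<forall>n. X (Suc n) < X n) \<and> (\<forall>n. Mf (X (Suc n)) < Mf (X n))"
      then obtain X where X: "\<forall>n. X n \<in> {..<t}" "\<forall>n. X (Suc n) < X n" "\<forall>n. Mf (X (Suc n)) < Mf (X n)"
        by blast
      have "X 0 < t" using X(1) by simp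
      then obtain z where z: "z \<in> S" "X 0 < z" using lt by blast
      have "X n \<le> X 0" for n using dec_trans[OF X(2), of 0 n] by (cases n) auto
      then have "\<forall>n. X n \<in> {..<z}" using z by (metis lessThan_iff order_le_less_trans)
      then show False using Sbad[OF z(1) _ X(2) X(3)] by blast
    qed
    obtain \<delta> where d: "\<delta> > 0" and "(\<forall>x<t+\<delta>. \<exists>v. evalM f g s k x v) \<and> ord_dec {..<t+\<delta>} Mf"
      using key[OF t0 H1 H2] by blast
    then have "t + \<delta> \<in> S" unfolding S_def by simp
    then have "t + \<delta> \<le> t" unfolding t_def by (rule cSup_upper[OF _ bdd])
    then show False using d by simp
  qed
  have "\<forall>x. \<exists>v. evalM f g s k x v"
  proof
    fix x show "\<exists>v. evalM f g s k x v" using Sh[OF allS[of "x + 1"]] by simp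
  qed
  moreover have "ord_dec UNIV Mf"
    unfolding ord_dec_def
  proof
    assume "\<exists>X. (\<forall>n. X n \<in> UNIV) \<and> (\<forall>n. X (Suc n) < X n) \<and> (\<forall>n. Mf (X (Suc n)) < Mf (X n))"
    then obtain X where X: "\<forall>n. X (Suc n) < X n" "\<forall>n. Mf (X (Suc n)) < Mf (X n)"
      by blast
    have "X n \<le> X 0" for n using dec_trans[OF X(1), of 0 n] by (cases n) auto
    then have "\<forall>n. X n \<in> {..<X 0 + 1}"
    proof -
      assume h: "\<And>n. X n \<le> X 0"
      show ?thesis
      proof
        fix n have "X n \<le> X 0" by (rule h)
        then show "X n \<in> {..<X 0 + 1}" by simp
      qed
    qed
    then show False using Sbad[OF allS[of "X 0 + 1"] _ X(1) X(2)] by blast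
  qed
  ultimately show ?thesis by blast
qed

end

theorem theorem1:
  fixes f :: "real \<Rightarrow> real" and g :: "nat \<Rightarrow> real \<Rightarrow> real"
    and s :: "real \<Rightarrow> real" and k :: nat
  assumes "k \<ge> 1"
    and "ord_dec {..<0} f" and "\<forall>x<0. f x > 0"
    and "\<forall>j\<in>{1..k}. ord_dec {..<0} (g j)"
    and "\<forall>j\<in>{1..k}. \<forall>x<0. g j x > 0"
    and "ord_dec {0..} s" and "\<forall>x\<ge>0. s x > 0"
  shows "(\<forall>x. \<exists>!v. evalM f g s k x v)
         \<and> ord_dec UNIV (\<lambda>x. THE v. evalM f g s k x v)"
proof -
  interpret Msys f g s k by (rule Msys.intro) (use assms in auto)
  note main = main
  have "Mf = (\<lambda>x. THE v. evalM f g s k x v)" by (simp add: Mf_def fun_eq_iff)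
  have ex: "\<forall>x. \<exists>v. evalM f g s k x v" using main by blast
  have "\<forall>x. \<exists>!v. evalM f g s k x v"
  proof
    fix x
    obtain v where v: "evalM f g s k x v" using ex by blast
    show "\<exists>!v. evalM f g s k x v"
      by (rule ex1I[of _ v]) (use v uniq(1) in blast)+
  qed
  moreover have "ord_dec UNIV (\<lambda>x. THE v. evalM f g s k x v)"
    using main \<open>Mf = (\<lambda>x. THE v. evalM f g s k x v)\<close> by simp
  ultimately show ?thesis by blast
qed

end
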